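(* Let $n>5$ be prime and let $\gamma$ be a probability distribution on $\mathbb{Z}_n$ with $\gamma(k)\in\mathbb{Q}$ for all $k$. Suppose $\hat{\gamma}(x)=\hat{\gamma}(y)$ for some $x,y\in\mathbb{Z}_n\setminus\{0\}$, and let $f_1,f_2:\mathbb{Z}_n\to\{0,1\}$ satisfy $f_1(k)=f_2(x^{-1}yk)$ for all $k$ (operations in the field $\mathbb{Z}_n$). Then, for the random walk $v(t)$ with step distribution $\gamma$, the sequences $\{f_1(v(t))\}_{t\ge1}$ and $\{f_2(v(t))\}_{t\ge1}$ have the same distribution.
   Context: $\hat{\gamma}(x)=\sum_{k\in\mathbb{Z}_n}\omega_n^{kx}\gamma(k)$ with $\omega_n=e^{-2\pi i/n}$. The random walk $v(t)$ has $v(1)$ uniform on $\mathbb{Z}_n$ and independent steps with $\mathbb{P}(v(t+1)-v(t)=k)=\gamma(k)$. *)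

theory Defs
  imports "HOL-Probability.Probability"
begin

text \<open>Elements of Z_n are represented by the naturals 0..n-1; a probability
distribution gamma on Z_n is a nat pmf supported in {..<n}.\<close>

definition fourier :: "nat \<Rightarrow> nat pmf \<Rightarrow> nat \<Rightarrow> complex" where
  "fourier n \<gamma> x = (\<Sum>k<n. exp (- 2 * of_real pi * \<i> * of_nat (k * x) / of_nat n) * of_real (pmf \<gamma> k))"

definition zn_inv :: "nat \<Rightarrow> nat \<Rightarrow> nat" where
  "zn_inv n x = (SOME z. z < n \<and> (x * z) mod n = 1)"

text \<open>walk_from n gamma T v: law of (v(1),...,v(T)) given v(1) = v.\<close>
fun walk_from :: "nat \<Rightarrow> nat pmf \<Rightarrow> nat \<Rightarrow> nat \<Rightarrow> nat list pmf" where
  "walk_from n \<gamma> 0 v = return_pmf []"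
| "walk_from n \<gamma> (Suc T) v =
     bind_pmf \<gamma> (\<lambda>k. map_pmf (\<lambda>vs. v # vs) (walk_from n \<gamma> T ((v + k) mod n)))"

definition walk :: "nat \<Rightarrow> nat pmf \<Rightarrow> nat \<Rightarrow> nat list pmf" where
  "walk n \<gamma> T = bind_pmf (pmf_of_set {..<n}) (walk_from n \<gamma> T)"

end

theory Submission imports Defs "HOL-Computational_Algebra.Polynomial_Factorial" begin

lemma eisenstein_aux:
  fixes F G H :: "int poly" and p :: int
  assumes FGH: "F = G * H" and pr: "prime p"
    and dvdF: "\<forall>i<degree F. p dvd coeff F i"
    and nsq: "\<not> p^2 dvd coeff F 0"
    and nlead: "\<not> p dvd lead_coeff F"
    and G0: "p dvd coeff G 0" and dH: "degree H > 0"
  shows False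
proof -
  have Gnz: "G \<noteq> 0" and Hnz: "H \<noteq> 0" using nlead FGH by auto
  have c0: "coeff F 0 = coeff G 0 * coeff H 0" using FGH by (simp add: coeff_mult)
  have H0: "\<not> p dvd coeff H 0"
  proof
    assume "p dvd coeff H 0"
    then have "p * p dvd coeff G 0 * coeff H 0" using G0 by (simp add: mult_dvd_mono)
    then show False using nsq c0 by (simp add: power2_eq_square)
  qed
  have "lead_coeff F = lead_coeff G * lead_coeff H" using FGH by (simp add: lead_coeff_mult)
  then have nG: "\<not> p dvd coeff G (degree G)" using nlead by auto
  define i where "i = (LEAST i. \<not> p dvd coeff G i)"
  have ni: "\<not> p dvd coeff G i" unfolding i_def by (rule LeastI[of _ "degree G"]) (rule nG)
  have ile: "i \<le> degree G" unfolding i_def by (rule Least_le) (rule nG)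
  have lt: "\<And>j. j < i \<Longrightarrow> p dvd coeff G j" unfolding i_def using not_less_Least by blast
  have degF: "degree F = degree G + degree H" using FGH Gnz Hnz by (simp add: degree_mult_eq)
  have "i < degree F" using ile dH degF by simp
  then have pF: "p dvd coeff F i" using dvdF by simp
  have "coeff F i = (\<Sum>j\<le>i. coeff G j * coeff H (i - j))" using FGH by (simp add: coeff_mult)
  also have "{..i} = insert i {..<i}" by auto
  also have "(\<Sum>j\<in>insert i {..<i}. coeff G j * coeff H (i - j)) =
      coeff G i * coeff H 0 + (\<Sum>j<i. coeff G j * coeff H (i - j))" by simp
  finally have eq: "coeff F i = coeff G i * coeff H 0 + (\<Sum>j<i. coeff G j * coeff H (i - j))" .
  have "p dvd (\<Sum>j<i. coeff G j * coeff H (i - j))"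
    by (rule dvd_sum) (simp add: lt)
  then have "p dvd coeff G i * coeff H 0" using pF eq by (metis dvd_add_left_iff)
  then show False using pr ni H0 by (simp add: prime_dvd_mult_iff)
qed

lemma eisenstein:
  fixes F G H :: "int poly" and p :: int
  assumes FGH: "F = G * H" and pr: "prime p"
    and dvdF: "\<forall>i<degree F. p dvd coeff F i"
    and nsq: "\<not> p^2 dvd coeff F 0"
    and nlead: "\<not> p dvd lead_coeff F"
  shows "degree G = 0 \<or> degree H = 0"
proof (rule ccontr)
  assume "\<not> (degree G = 0 \<or> degree H = 0)"
  then have dG: "degree G > 0" and dH: "degree H > 0" by auto
  have "coeff F 0 = coeff G 0 * coeff H 0" using FGH by (simp add: coeff_mult)
  moreover have "p dvd coeff F 0"
    using dvdF dG FGH nlead by (metis degree_mult_eq gr_zeroI add_gr_0 mult_zero_left mult_zero_right leading_coeff_0_iff dvd_0_right)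
  ultimately have "p dvd coeff G 0 \<or> p dvd coeff H 0" using pr by (simp add: prime_dvd_mult_iff)
  then show False
  proof
    assume "p dvd coeff G 0" then show False using eisenstein_aux[OF FGH pr dvdF nsq nlead _ dH] by simp
  next
    assume "p dvd coeff H 0" then show False
      using eisenstein_aux[of F H G p] FGH pr dvdF nsq nlead dG by (simp add: mult.commute)
  qed
qed

definition Phi :: "nat \<Rightarrow> int poly" where "Phi n = (\<Sum>k<n. monom 1 k)"

lemma coeff_Phi: "coeff (Phi n) i = (if i < n then 1 else 0)"
  by (simp add: Phi_def coeff_sum coeff_monom)

lemma degree_Phi: assumes "n > 0" shows "degree (Phi n) = n - 1"
proof (rule antisym)
  show "degree (Phi n) \<le> n - 1" by (rule degree_le) (auto simp: coeff_Phi)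
  show "n - 1 \<le> degree (Phi n)" by (rule le_degree) (use assms in \<open>simp add: coeff_Phi\<close>)
qed

lemma lead_Phi: assumes "n > 0" shows "lead_coeff (Phi n) = 1"
  using assms by (simp add: degree_Phi coeff_Phi)

lemma Phi_mult: assumes "n > 0" shows "[:-1, 1:] * Phi n = monom 1 n - 1"
proof (rule poly_eqI)
  fix i
  show "coeff ([:-1, 1:] * Phi n) i = coeff (monom 1 n - 1) i"
    using assms by (cases i) (auto simp: coeff_Phi coeff_monom coeff_1)
qed

lemma pcompose_pow: "pcompose (p ^ k) r = (pcompose p r) ^ k"
  by (induction k) (simp_all add: pcompose_1 pcompose_mult)

definition Fshift :: "nat \<Rightarrow> int poly" where "Fshift n = pcompose (Phi n) [:1,1:]"

lemma Fshift_mult: assumes "n > 0" shows "pCons 0 (Fshift n) = [:1,1:]^n - 1"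
proof -
  have "pcompose ([:-1, 1:] * Phi n) [:1,1:] = pcompose (monom 1 n - 1) [:1,1:]"
    using Phi_mult[OF assms] by simp
  then show ?thesis
    by (simp add: pcompose_mult pcompose_diff pcompose_pCons Fshift_def monom_altdef pcompose_1 
        pcompose_pow)
qed

lemma coeff_Fshift: assumes "i < n" shows "coeff (Fshift n) i = int (n choose Suc i)"
proof -
  have "coeff (Fshift n) i = coeff (pCons 0 (Fshift n)) (Suc i)" by simp
  also have "\<dots> = coeff ([:1,1:]^n - 1) (Suc i)" using assms by (simp add: Fshift_mult)
  also have "\<dots> = int (n choose Suc i)" using assms by (simp add: coeff_linear_poly_power coeff_1)
  finally show ?thesis .
qed

lemma degree_Fshift: assumes "n > 0" shows "degree (Fshift n) = n - 1"
  using assms by (simp add: Fshift_def degree_pcompose degree_Phi)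

lemma irreducible_Phi:
  assumes pr: "prime n"
  shows "irreducible (Phi n)"
proof -
  have n1: "n > 1" using pr prime_gt_1_nat by blast
  then have n0: "n > 0" by simp
  have dP: "degree (Phi n) = n - 1" using degree_Phi[OF n0] .
  show ?thesis
  proof (rule irreducibleI)
    show "Phi n \<noteq> 0" using lead_Phi[OF n0] by auto
    show "\<not> is_unit (Phi n)" using dP n1 by (auto simp: is_unit_poly_iff)
    fix g h assume gh: "Phi n = g * h"
    have FGH: "Fshift n = pcompose g [:1,1:] * pcompose h [:1,1:]"
      unfolding Fshift_def gh by (simp add: pcompose_mult)
    have pri: "prime (int n)" using pr by simp
    have dF: "degree (Fshift n) = n - 1" using degree_Fshift[OF n0] .
    have "degree (pcompose g [:1,1:]) = 0 \<or> degree (pcompose h [:1,1:]) = 0"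
    proof (rule eisenstein[OF FGH pri])
      show "\<forall>i<degree (Fshift n). int n dvd coeff (Fshift n) i"
      proof (intro allI impI)
        fix i assume "i < degree (Fshift n)"
        then have i: "Suc i < n" using dF by simp
        have "n dvd (n choose Suc i)" using dvd_choose_prime[OF i _ _ pr] n0 by simp
        then show "int n dvd coeff (Fshift n) i" using i by (simp add: coeff_Fshift)
      qed
      show "\<not> (int n)^2 dvd coeff (Fshift n) 0"
      proof
        assume "(int n)^2 dvd coeff (Fshift n) 0"
        then have "int n * int n dvd int n * 1" using n0 by (simp add: coeff_Fshift power2_eq_square)
        then have "int n dvd 1" using n0 by (metis dvd_mult_cancel_left of_nat_eq_0_iff not_gr0)
        then show False using n1 by simp
      qed
      show "\<not> int n dvd lead_coeff (Fshift n)"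
        using dF n1 by (simp add: coeff_Fshift)
    qed
    then have "degree g = 0 \<or> degree h = 0" by (simp add: degree_pcompose)
    moreover have "lead_coeff g * lead_coeff h = 1" using gh lead_Phi[OF n0] by (simp add: lead_coeff_mult)
    ultimately show "is_unit g \<or> is_unit h"
      by (metis degree_eq_zeroE is_unit_poly_iff lead_coeff_pCons(2) dvd_triv_left dvd_triv_right pCons_0_0 coeff_pCons_0)
  qed
qed

definition ipoly :: "int poly \<Rightarrow> complex poly" where "ipoly r = map_poly of_int r"

lemma coeff_ipoly: "coeff (ipoly r) i = of_int (coeff r i)"
  by (simp add: ipoly_def coeff_map_poly)

lemma ipoly_mult: "ipoly (p * q) = ipoly p * ipoly q"
  by (rule poly_eqI) (simp add: coeff_ipoly coeff_mult)

lemma ipoly_add: "ipoly (p + q) = ipoly p + ipoly q"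
  by (rule poly_eqI) (simp add: coeff_ipoly)

lemma ipoly_smult: "ipoly (smult a p) = smult (of_int a) (ipoly p)"
  by (rule poly_eqI) (simp add: coeff_ipoly)

lemma ipoly_const: "ipoly [:c:] = [:of_int c:]"
  by (rule poly_eqI) (simp add: coeff_ipoly coeff_pCons split: nat.split)

lemma ipoly_Phi: "poly (ipoly (Phi n)) z = (\<Sum>k<n. z ^ k)"
proof -
  have "ipoly (Phi n) = (\<Sum>k<n. monom 1 k)"
    by (rule poly_eqI) (simp add: coeff_ipoly coeff_Phi coeff_sum coeff_monom)
  then show ?thesis by (simp add: poly_sum poly_monom)
qed

lemma no_small_root:
  fixes z :: complex
  assumes pr: "prime n" and z1: "z \<noteq> 1" and zn: "z ^ n = 1"
    and r0: "r0 \<noteq> 0" and ev0: "poly (ipoly r0) z = 0"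
  shows "degree r0 \<ge> n - 1"
proof (rule ccontr)
  assume small: "\<not> degree r0 \<ge> n - 1"
  have n0: "n > 0" using pr prime_gt_0_nat by blast
  have Pz: "poly (ipoly (Phi n)) z = 0"
  proof -
    have "(1 - z) * (\<Sum>k<n. z ^ k) = 1 - z ^ n" by (rule one_diff_power_eq[symmetric])
    then have "(1 - z) * (\<Sum>k<n. z ^ k) = 0" using zn by simp
    then show ?thesis using z1 by (simp add: ipoly_Phi)
  qed
  define S where "S = {r. r \<noteq> 0 \<and> poly (ipoly r) z = 0}"
  have "r0 \<in> S" using r0 ev0 by (simp add: S_def)
  then obtain r where rS: "r \<in> S" and rmin: "\<And>s. s \<in> S \<Longrightarrow> degree r \<le> degree s"
    using ex_has_least_nat[of "\<lambda>r. r \<in> S" r0 degree] by blast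
  have rnz: "r \<noteq> 0" and rz: "poly (ipoly r) z = 0" using rS by (auto simp: S_def)
  have rsmall: "degree r < n - 1" using rmin[OF \<open>r0 \<in> S\<close>] small by simp
  define R where "R = pseudo_mod (Phi n) r"
  obtain a q where a0: "a \<noteq> 0" and eq: "smult a (Phi n) = r * q + R"
    using pseudo_mod(1)[OF rnz, of "Phi n"] unfolding R_def by blast
  have Rdeg: "R = 0 \<or> degree R < degree r" using pseudo_mod(2)[OF rnz, of "Phi n"] unfolding R_def by blast
  have "poly (ipoly (smult a (Phi n))) z = poly (ipoly (r * q + R)) z" using eq by simp
  then have "poly (ipoly R) z = 0" using Pz rz by (simp add: ipoly_smult ipoly_add ipoly_mult)
  then have R0: "R = 0" using Rdeg rmin[of R] by (force simp: S_def)
  have "prime_elem (Phi n)" using irreducible_imp_prime_poly[OF irreducible_Phi[OF pr]] .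
  moreover have eq2: "[:a:] * Phi n = r * q" using eq R0 by simp
  ultimately have "Phi n dvd r \<or> Phi n dvd q" by (metis dvd_triv_right prime_elem_dvd_multD)
  then show False
  proof
    assume "Phi n dvd r"
    then have "degree (Phi n) \<le> degree r" using rnz by (rule dvd_imp_degree_le)
    then show False using rsmall degree_Phi[OF n0] by simp
  next
    assume "Phi n dvd q"
    then obtain t where t: "q = Phi n * t" by (elim dvdE)
    have Pnz: "Phi n \<noteq> 0" using lead_Phi[OF n0] by auto
    have "[:a:] * Phi n = (r * t) * Phi n" using eq2 t by (simp add: ac_simps)
    then have at: "[:a:] = r * t" using Pnz mult_right_cancel by blast
    then have "t \<noteq> 0" using a0 by auto
    then have "degree r = 0" using at rnz by (metis degree_pCons_0 degree_mult_eq add_is_0)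
    then obtain c where c: "r = [:c:]" by (elim degree_eq_zeroE)
    then have "c \<noteq> 0" using rnz by simp
    then show False using rz c by (simp add: ipoly_const)
  qed
qed

lemma lin_indep_int:
  fixes z :: complex and N :: "nat \<Rightarrow> int"
  assumes pr: "prime n" and z1: "z \<noteq> 1" and zn: "z ^ n = 1"
    and s0: "(\<Sum>m<n. of_int (N m) * z ^ m) = 0"
  shows "\<forall>m<n. N m = N (n - 1)"
proof -
  have n1: "n > 1" using pr prime_gt_1_nat by blast
  define q :: "int poly" where "q = (\<Sum>m<n-1. monom (N m - N (n-1)) m)"
  have cq: "coeff q i = (if i < n - 1 then N i - N (n-1) else 0)" for i
    by (simp add: q_def coeff_sum coeff_monom)
  have geo: "(\<Sum>k<n. z ^ k) = 0"
  proof -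
    have "(1 - z) * (\<Sum>k<n. z ^ k) = 1 - z ^ n" by (rule one_diff_power_eq[symmetric])
    then have "(1 - z) * (\<Sum>k<n. z ^ k) = 0" using zn by simp
    then show ?thesis using z1 by simp
  qed
  have "ipoly q = (\<Sum>m<n-1. monom (of_int (N m - N (n-1))) m)"
    by (rule poly_eqI) (simp add: coeff_ipoly cq coeff_sum coeff_monom)
  then have "poly (ipoly q) z = (\<Sum>m<n-1. of_int (N m - N (n-1)) * z ^ m)"
    by (simp add: poly_sum poly_monom)
  also have "\<dots> = (\<Sum>m<n. of_int (N m - N (n-1)) * z ^ m)"
  proof -
    have "{..<n} = insert (n-1) {..<n-1}" using n1 by auto
    then show ?thesis by simp
  qed
  also have "\<dots> = (\<Sum>m<n. of_int (N m) * z ^ m) - of_int (N (n-1)) * (\<Sum>m<n. z ^ m)"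
    by (simp add: algebra_simps sum_subtractf sum_distrib_left sum_distrib_right)
  also have "\<dots> = 0" using s0 geo by simp
  finally have qz: "poly (ipoly q) z = 0" .
  have "q = 0"
  proof (rule ccontr)
    assume qnz: "q \<noteq> 0"
    have "degree q \<le> n - 2" by (rule degree_le) (auto simp: cq)
    then show False using no_small_root[OF pr z1 zn qnz qz] n1 by simp
  qed
  show ?thesis
  proof (intro allI impI)
    fix m assume m: "m < n"
    show "N m = N (n - 1)"
    proof (cases "m < n - 1")
      case True
      then have "coeff q m = N m - N (n-1)" by (simp add: cq)
      then show ?thesis using \<open>q = 0\<close> by simp
    next
      case False then have "m = n - 1" using m by simp
      then show ?thesis by simp
    qed
  qed
qed

lemma common_denom:
  fixes A :: "real set"
  assumes "finite A" "A \<subseteq> \<rat>"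
  shows "\<exists>D::int. D > 0 \<and> (\<forall>x\<in>A. of_int D * x \<in> \<int>)"
  using assms
proof (induction A rule: finite_induct)
  case empty then show ?case by (intro exI[of _ 1]) simp
next
  case (insert x A)
  then obtain D where D: "D > 0" "\<forall>y\<in>A. of_int D * y \<in> \<int>" by auto
  from insert.prems have "x \<in> \<rat>" by simp
  then obtain a b where ab: "b > 0" "x = of_int a / of_int b" by (elim Rats_cases') auto
  show ?case
  proof (intro exI[of _ "D * b"] conjI ballI)
    show "D * b > 0" using D ab by simp
    fix y assume "y \<in> insert x A"
    then show "of_int (D * b) * y \<in> \<int>"
    proof
      assume "y = x" then show ?thesis using ab by simp
    next
      assume "y \<in> A"
      then have "of_int D * y \<in> \<int>" using D by simp
      then have "of_int b * (of_int D * y) \<in> \<int>" by simp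
      then show ?thesis by (simp add: ac_simps)
    qed
  qed
qed

lemma lin_indep_rat:
  fixes z :: complex and c :: "nat \<Rightarrow> real"
  assumes pr: "prime n" and z1: "z \<noteq> 1" and zn: "z ^ n = 1"
    and rat: "\<forall>m. c m \<in> \<rat>"
    and s0: "(\<Sum>m<n. of_real (c m) * z ^ m) = 0"
  shows "\<forall>m<n. c m = c (n - 1)"
proof -
  obtain D :: int where D: "D > 0" "\<forall>x\<in>c ` {..<n}. of_int D * x \<in> \<int>"
    using common_denom[of "c ` {..<n}"] rat by auto
  define N where "N m = \<lfloor>of_int D * c m\<rfloor>" for m
  have N: "of_int (N m) = of_int D * c m" if "m < n" for m
  proof -
    have "of_int D * c m \<in> \<int>" using D(2) that by simp
    then obtain k where "of_int D * c m = of_int k" by (elim Ints_cases)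
    then show ?thesis unfolding N_def by simp
  qed
  have eqm: "of_int (N m) * z ^ m = of_int D * (of_real (c m) * z ^ m)" if "m \<in> {..<n}" for m
  proof -
    have "(of_int (N m) :: complex) = of_real (of_int (N m))" by (rule of_real_of_int_eq[symmetric])
    also have "\<dots> = of_real (of_int D * c m)" using N that by simp
    also have "\<dots> = of_int D * of_real (c m)" by simp
    finally show ?thesis by (simp only: mult.assoc)
  qed
  have "(\<Sum>m<n. of_int (N m) * z ^ m) = (\<Sum>m<n. of_int D * (of_real (c m) * z ^ m))"
    by (rule sum.cong[OF refl eqm])
  also have "\<dots> = of_int D * (\<Sum>m<n. of_real (c m) * z ^ m)" by (rule sum_distrib_left[symmetric])
  also have "\<dots> = 0" by (simp only: s0 mult_zero_right)
  finally have "\<forall>m<n. N m = N (n-1)" by (rule lin_indep_int[OF pr z1 zn])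
  moreover have "n - 1 < n" using pr prime_gt_0_nat by simp
  ultimately show ?thesis
  proof (intro allI impI)
    fix m assume "m < n"
    then have "of_int D * c m = of_int D * c (n-1)"
    proof -
      have "N m = N (n-1)" using \<open>\<forall>m<n. N m = N (n-1)\<close> \<open>m < n\<close> by blast
      then have "(of_int (N m)::real) = of_int (N (n-1))" by (simp only:)
      then show ?thesis using N[of m] N[of "n-1"] \<open>n - 1 < n\<close> \<open>m < n\<close> by (simp only:)
    qed
    then show "c m = c (n - 1)" using D(1) by simp
  qed
qed



lemma inv_exists:
  fixes n u :: nat
  assumes pr: "prime n" and u: "u \<in> {1..<n}"
  shows "\<exists>v. v < n \<and> (u * v) mod n = 1"
proof -
  have n1: "n > 1" using pr prime_gt_1_nat by blast
  have "\<not> n dvd u" using u by (auto dest: dvd_imp_le)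
  then have cop: "coprime n u" using pr prime_imp_coprime by blast
  have "u \<noteq> 0" using u by simp
  then obtain a b where ab: "u * a = n * b + gcd u n" using bezout_nat by blast
  have "gcd u n = 1" using cop by (simp add: coprime_iff_gcd_eq_1 gcd.commute)
  then have "u * a = 1 + n * b" using ab by simp
  then have "(u * a) mod n = (1 + n * b) mod n" by simp
  also have "\<dots> = 1 mod n" by (metis mod_mult_self2 mult.commute)
  finally have "(u * a) mod n = 1" using n1 by simp
  then have "(u * (a mod n)) mod n = 1" by (simp add: mod_mult_right_eq)
  moreover have "a mod n < n" using n1 by simp
  ultimately show ?thesis by blast
qed

lemma mod_inv_cancel:
  fixes n u v k :: nat
  assumes "(u * v) mod n = 1"
  shows "(((k * u) mod n) * v) mod n = k mod n"
proof -
  have "(((k * u) mod n) * v) mod n = (k * u * v) mod n" by (simp add: mod_mult_left_eq)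
  also have "\<dots> = (k * ((u * v) mod n)) mod n" by (simp add: mod_mult_right_eq mult.assoc)
  also have "\<dots> = k mod n" using assms by simp
  finally show ?thesis .
qed

lemma sum_reindex_mod:
  fixes g :: "nat \<Rightarrow> complex" and z :: complex
  assumes uv: "(u * v) mod n = 1" and vu: "(v * u) mod n = 1" and n0: "n > 0"
  shows "(\<Sum>k<n. z ^ ((k * u) mod n) * g k) = (\<Sum>m<n. z ^ m * g ((m * v) mod n))"
proof -
  let ?h = "\<lambda>k. (k * u) mod n"
  have bij: "bij_betw ?h {..<n} {..<n}"
  proof (rule bij_betwI[where g = "\<lambda>m. (m * v) mod n"])
    show "?h \<in> {..<n} \<rightarrow> {..<n}" using n0 by auto
    show "(\<lambda>m. (m * v) mod n) \<in> {..<n} \<rightarrow> {..<n}" using n0 by auto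
    fix k assume "k \<in> {..<n}"
    then show "((k * u) mod n * v) mod n = k" using mod_inv_cancel[OF uv] by simp
  next
    fix m assume "m \<in> {..<n}"
    then show "((m * v) mod n * u) mod n = m" using mod_inv_cancel[OF vu] by simp
  qed
  have "(\<Sum>m<n. z ^ m * g ((m * v) mod n)) = (\<Sum>k<n. z ^ ?h k * g ((?h k * v) mod n))"
    by (rule sum.reindex_bij_betw[OF bij, symmetric])
  also have "\<dots> = (\<Sum>k<n. z ^ ((k * u) mod n) * g k)"
    by (rule sum.cong) (simp_all add: mod_inv_cancel[OF uv])
  finally show ?thesis by simp
qed

definition zeta :: "nat \<Rightarrow> complex" where "zeta n = exp (- 2 * of_real pi * \<i> / of_nat n)"

lemma zeta_pow_n: assumes "n > 0" shows "zeta n ^ n = 1"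
proof -
  have "zeta n ^ n = exp (of_nat n * (- 2 * of_real pi * \<i> / of_nat n))"
    unfolding zeta_def by (rule exp_of_nat_mult[symmetric])
  also have "of_nat n * (- 2 * of_real pi * \<i> / of_nat n) = - (2 * of_real pi * \<i>)" using assms by simp
  also have "exp \<dots> = 1" by (simp add: exp_minus)
  finally show ?thesis .
qed

lemma zeta_ne_1: assumes "n > 1" shows "zeta n \<noteq> 1"
proof
  assume "zeta n = 1"
  then obtain j :: int where j: "Im (- 2 * of_real pi * \<i> / of_nat n) = of_int (2 * j) * pi"
    unfolding zeta_def exp_eq_1 by blast
  have "Im (- 2 * of_real pi * \<i> / of_nat n) = - 2 * pi / n" by simp
  with j have "- 2 * pi / n = 2 * j * pi" by simp
  then have "2 * pi * (- 1) = 2 * pi * (real_of_int j * real n)" using assms by (simp add: field_simps)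
  then have "- 1 = real_of_int j * n" using pi_gt_zero by (simp only: mult_left_cancel)
  then have "real_of_int (- 1) = real_of_int (j * int n)" by simp
  then have "- 1 = j * int n" by (simp only: of_int_eq_iff)
  then have "int n dvd 1" by (metis dvd_minus_iff dvd_triv_right)
  then show False using assms by simp
qed

lemma zeta_pow_mod: assumes "n > 0" shows "zeta n ^ (j mod n) = zeta n ^ j"
proof -
  have "zeta n ^ j = zeta n ^ (n * (j div n) + j mod n)" by simp
  also have "\<dots> = (zeta n ^ n) ^ (j div n) * zeta n ^ (j mod n)" by (simp only: power_add power_mult)
  finally show ?thesis using zeta_pow_n[OF assms] by simp
qed

lemma exp_term: assumes "n > 0"
  shows "exp (- 2 * of_real pi * \<i> * of_nat j / of_nat n) = zeta n ^ (j mod n)"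
proof -
  have "exp (- 2 * of_real pi * \<i> * of_nat j / of_nat n) = exp (of_nat j * (- 2 * of_real pi * \<i> / of_nat n))"
    by (simp add: field_simps)
  also have "\<dots> = zeta n ^ j" unfolding zeta_def by (rule exp_of_nat_mult)
  finally show ?thesis using zeta_pow_mod[OF assms] by simp
qed


lemma zn_inv_prop:
  assumes pr: "prime n" and u: "u \<in> {1..<n}"
  shows "zn_inv n u < n \<and> (u * zn_inv n u) mod n = 1"
  unfolding zn_inv_def by (rule someI_ex[OF inv_exists[OF pr u]])

lemma fourier_reindex:
  assumes pr: "prime n" and u: "u \<in> {1..<n}"
  shows "fourier n \<gamma> u = (\<Sum>m<n. zeta n ^ m * of_real (pmf \<gamma> ((m * zn_inv n u) mod n)))"
proof -
  have n0: "n > 0" using pr prime_gt_0_nat by blast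
  have uv: "(u * zn_inv n u) mod n = 1" using zn_inv_prop[OF pr u] by simp
  then have vu: "(zn_inv n u * u) mod n = 1" by (simp add: mult.commute)
  have "fourier n \<gamma> u = (\<Sum>k<n. zeta n ^ ((k * u) mod n) * of_real (pmf \<gamma> k))"
    unfolding fourier_def by (rule sum.cong[OF refl], subst exp_term[OF n0], rule refl)
  also have "\<dots> = (\<Sum>m<n. zeta n ^ m * of_real (pmf \<gamma> ((m * zn_inv n u) mod n)))"
    by (rule sum_reindex_mod[OF uv vu n0])
  finally show ?thesis .
qed

lemma gamma_invariant:
  assumes pr: "prime n"
    and rat: "\<forall>k. pmf \<gamma> k \<in> \<rat>"
    and x: "x \<in> {1..<n}" and y: "y \<in> {1..<n}"
    and F: "fourier n \<gamma> x = fourier n \<gamma> y"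
  shows "\<forall>k<n. pmf \<gamma> ((zn_inv n x * y * k) mod n) = pmf \<gamma> k"
proof -
  have n1: "n > 1" using pr prime_gt_1_nat by blast
  define xv where "xv = zn_inv n x"
  define yv where "yv = zn_inv n y"
  have yyv: "(y * yv) mod n = 1" using zn_inv_prop[OF pr y] by (simp add: yv_def)
  define c where "c m = pmf \<gamma> ((m * xv) mod n) - pmf \<gamma> ((m * yv) mod n)" for m
  have "(\<Sum>m<n. of_real (c m) * zeta n ^ m) =
      (\<Sum>m<n. zeta n ^ m * of_real (pmf \<gamma> ((m * xv) mod n))) - (\<Sum>m<n. zeta n ^ m * of_real (pmf \<gamma> ((m * yv) mod n)))"
    by (simp add: c_def sum_subtractf algebra_simps)
  also have "\<dots> = 0" using F by (simp add: fourier_reindex[OF pr x] fourier_reindex[OF pr y] xv_def yv_def)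
  finally have s0: "(\<Sum>m<n. of_real (c m) * zeta n ^ m) = 0" .
  have crat: "\<forall>m. c m \<in> \<rat>" using rat by (simp add: c_def)
  have ceq: "\<forall>m<n. c m = c (n - 1)"
    by (rule lin_indep_rat[OF pr zeta_ne_1[OF n1] zeta_pow_n crat s0]) (use n1 in simp)
  have "c 0 = 0" by (simp add: c_def)
  then have cz: "\<forall>m<n. c m = 0" using ceq n1 by (metis zero_less_one less_trans)
  show ?thesis
  proof (intro allI impI)
    fix k assume k: "k < n"
    define m where "m = (k * y) mod n"
    have "m < n" using n1 by (simp add: m_def)
    then have "pmf \<gamma> ((m * xv) mod n) = pmf \<gamma> ((m * yv) mod n)" using cz by (simp add: c_def)
    moreover have "(m * yv) mod n = k" using mod_inv_cancel[OF yyv, of k] k by (simp add: m_def)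
    moreover have "(m * xv) mod n = (zn_inv n x * y * k) mod n"
    proof -
      have "(m * xv) mod n = (k * y * xv) mod n" unfolding m_def by (rule mod_mult_left_eq)
      also have "k * y * xv = zn_inv n x * y * k" unfolding xv_def by (simp only: ac_simps)
      finally show ?thesis .
    qed
    ultimately show "pmf \<gamma> ((zn_inv n x * y * k) mod n) = pmf \<gamma> k" by simp
  qed
qed

locale mulinv =
  fixes n a b :: nat and \<gamma> :: "nat pmf"
  assumes n0: "n > 0" and ab: "(a * b) mod n = 1"
    and supp: "set_pmf \<gamma> \<subseteq> {..<n}"
    and inv: "\<forall>k<n. pmf \<gamma> ((a * k) mod n) = pmf \<gamma> k"
begin

definition mu where "mu k = (a * k) mod n"

lemma mu_less: "mu k < n" using n0 by (simp add: mu_def)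

lemma mu_inv1: "k < n \<Longrightarrow> mu ((b * k) mod n) = k"
proof -
  assume k: "k < n"
  have "mu ((b * k) mod n) = (a * (b * k)) mod n" by (simp add: mu_def mod_mult_right_eq)
  also have "\<dots> = ((a * b) mod n * k) mod n" by (simp add: mod_mult_left_eq mult.assoc)
  also have "\<dots> = k" using ab k by simp
  finally show ?thesis .
qed

lemma mu_inv2: "k < n \<Longrightarrow> (b * mu k) mod n = k"
proof -
  assume k: "k < n"
  have "(b * mu k) mod n = (b * (a * k)) mod n" by (simp add: mu_def mod_mult_right_eq)
  also have "b * (a * k) = (a * b) * k" by simp
  also have "((a * b) * k) mod n = ((a * b) mod n * k) mod n" by (rule mod_mult_left_eq[symmetric])
  also have "\<dots> = k" using ab k by simp
  finally show ?thesis .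
qed

lemma meas_restrict: "measure_pmf.prob \<gamma> (A \<inter> {..<n}) = measure_pmf.prob \<gamma> A"
proof -
  have "measure_pmf.prob \<gamma> (A \<inter> {..<n}) = measure_pmf.prob \<gamma> (A \<inter> {..<n} \<inter> set_pmf \<gamma>)"
    by (rule measure_Int_set_pmf[symmetric])
  also have "A \<inter> {..<n} \<inter> set_pmf \<gamma> = A \<inter> set_pmf \<gamma>" using supp by auto
  also have "measure_pmf.prob \<gamma> \<dots> = measure_pmf.prob \<gamma> A" by (rule measure_Int_set_pmf)
  finally show ?thesis .
qed

lemma map_gamma: "map_pmf mu \<gamma> = \<gamma>"
proof (rule pmf_eqI)
  fix j
  show "pmf (map_pmf mu \<gamma>) j = pmf \<gamma> j"
  proof (cases "j < n")
    case True
    have "mu -` {j} \<inter> {..<n} = {(b * j) mod n}"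
    proof (intro equalityI subsetI)
      fix k assume "k \<in> mu -` {j} \<inter> {..<n}"
      then have "k < n" "mu k = j" by auto
      then show "k \<in> {(b * j) mod n}" using mu_inv2 by auto
    next
      fix k assume "k \<in> {(b * j) mod n}"
      then show "k \<in> mu -` {j} \<inter> {..<n}" using mu_inv1[OF True] n0 by auto
    qed
    then have "pmf (map_pmf mu \<gamma>) j = pmf \<gamma> ((b * j) mod n)"
      by (metis pmf_map meas_restrict measure_pmf_single)
    also have "\<dots> = pmf \<gamma> (mu ((b * j) mod n))" using inv n0 by (simp add: mu_def)
    also have "\<dots> = pmf \<gamma> j" using mu_inv1[OF True] by simp
    finally show ?thesis .
  next
    case False
    have "mu -` {j} = {}" using mu_less False by (metis empty_iff subsetI subset_empty vimage_singleton_eq)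
    then have "pmf (map_pmf mu \<gamma>) j = 0" by (simp add: pmf_map)
    moreover have "pmf \<gamma> j = 0" using supp False by (meson lessThan_iff set_pmf_iff subsetD)
    ultimately show ?thesis by simp
  qed
qed

lemma mu_add: "mu ((v + k) mod n) = (mu v + mu k) mod n"
  by (simp add: mu_def mod_mult_right_eq mod_add_eq distrib_left)

lemma map_walk_from: "map_pmf (map mu) (walk_from n \<gamma> T v) = walk_from n \<gamma> T (mu v)"
proof (induction T arbitrary: v)
  case 0
  then show ?case by simp
next
  case (Suc T)
  have "map_pmf (map mu) (walk_from n \<gamma> (Suc T) v) =
     bind_pmf \<gamma> (\<lambda>k. map_pmf (\<lambda>vs. mu v # vs) (map_pmf (map mu) (walk_from n \<gamma> T ((v + k) mod n))))"
    by (simp add: map_bind_pmf map_pmf_comp)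
  also have "\<dots> = bind_pmf \<gamma> (\<lambda>k. map_pmf (\<lambda>vs. mu v # vs) (walk_from n \<gamma> T ((mu v + mu k) mod n)))"
    by (simp add: Suc.IH mu_add)
  also have "\<dots> = bind_pmf (map_pmf mu \<gamma>) (\<lambda>k. map_pmf (\<lambda>vs. mu v # vs) (walk_from n \<gamma> T ((mu v + k) mod n)))"
    by (simp add: bind_map_pmf)
  also have "\<dots> = walk_from n \<gamma> (Suc T) (mu v)" by (simp add: map_gamma)
  finally show ?case .
qed

lemma map_uniform: "map_pmf mu (pmf_of_set {..<n}) = pmf_of_set {..<n}"
proof -
  have inj: "inj_on mu {..<n}" by (metis inj_onI lessThan_iff mu_inv2)
  have img: "mu ` {..<n} = {..<n}"
  proof (intro equalityI subsetI)
    fix j assume "j \<in> mu ` {..<n}" then show "j \<in> {..<n}" using mu_less by auto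
  next
    fix j assume "j \<in> {..<n}"
    then have "j = mu ((b * j) mod n)" "(b * j) mod n < n" using mu_inv1 n0 by auto
    then show "j \<in> mu ` {..<n}" by blast
  qed
  show ?thesis using map_pmf_of_set_inj[OF inj] n0 img by auto
qed

lemma map_walk: "map_pmf (map mu) (walk n \<gamma> T) = walk n \<gamma> T"
proof -
  have "map_pmf (map mu) (walk n \<gamma> T) = bind_pmf (pmf_of_set {..<n}) (\<lambda>v. walk_from n \<gamma> T (mu v))"
    unfolding walk_def by (simp add: map_bind_pmf map_walk_from)
  also have "\<dots> = bind_pmf (map_pmf mu (pmf_of_set {..<n})) (walk_from n \<gamma> T)"
    by (simp add: bind_map_pmf)
  also have "\<dots> = walk n \<gamma> T" by (simp add: map_uniform walk_def)
  finally show ?thesis .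
qed

lemma set_walk_from: "v < n \<Longrightarrow> xs \<in> set_pmf (walk_from n \<gamma> T v) \<Longrightarrow> set xs \<subseteq> {..<n}"
proof (induction T arbitrary: v xs)
  case 0 then show ?case by simp
next
  case (Suc T)
  from Suc.prems obtain k ys where xs: "xs = v # ys" and ys: "ys \<in> set_pmf (walk_from n \<gamma> T ((v + k) mod n))"
    by auto
  have "(v + k) mod n < n" using n0 by simp
  then have "set ys \<subseteq> {..<n}" using Suc.IH ys by blast
  then show ?case using xs Suc.prems(1) by simp
qed

lemma set_walk: "xs \<in> set_pmf (walk n \<gamma> T) \<Longrightarrow> set xs \<subseteq> {..<n}"
proof -
  assume "xs \<in> set_pmf (walk n \<gamma> T)"
  then obtain v where "v \<in> set_pmf (pmf_of_set {..<n})" "xs \<in> set_pmf (walk_from n \<gamma> T v)"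
    by (auto simp: walk_def)
  moreover have "v < n"
  proof -
    have "{..<n} \<noteq> {}" using n0 by auto
    then show ?thesis using calculation(1) by (simp add: set_pmf_of_set)
  qed
  ultimately show ?thesis using set_walk_from by blast
qed

end


theorem lemma2:
  fixes n :: nat and \<gamma> :: "nat pmf" and x y :: nat and f1 f2 :: "nat \<Rightarrow> nat"
  assumes "prime n" and "n > 5"
    and "set_pmf \<gamma> \<subseteq> {..<n}"
    and "\<forall>k. pmf \<gamma> k \<in> \<rat>"
    and "x \<in> {1..<n}" and "y \<in> {1..<n}"
    and "fourier n \<gamma> x = fourier n \<gamma> y"
    and "\<forall>k<n. f1 k \<in> {0, 1} \<and> f2 k \<in> {0, 1}"
    and "\<forall>k<n. f1 k = f2 ((zn_inv n x * y * k) mod n)"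
  shows "\<forall>T. map_pmf (map f1) (walk n \<gamma> T) = map_pmf (map f2) (walk n \<gamma> T)"
proof -
  note pr = assms(1) and supp = assms(3) and rat = assms(4) and xr = assms(5) and yr = assms(6)
    and F = assms(7) and f12 = assms(9)
  have n0: "n > 0" using assms(2) by simp
  have inv: "\<forall>k<n. pmf \<gamma> ((zn_inv n x * y * k) mod n) = pmf \<gamma> k"
    by (rule gamma_invariant[OF pr rat xr yr F])
  define a where "a = zn_inv n x * y"
  define b where "b = x * zn_inv n y"
  have xx: "(x * zn_inv n x) mod n = 1" using zn_inv_prop[OF pr xr] by simp
  have yy: "(y * zn_inv n y) mod n = 1" using zn_inv_prop[OF pr yr] by simp
  have "(a * b) mod n = ((x * zn_inv n x) * (y * zn_inv n y)) mod n"
    unfolding a_def b_def by (simp only: ac_simps)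
  also have "\<dots> = (((x * zn_inv n x) mod n) * ((y * zn_inv n y) mod n)) mod n"
    by (rule mod_mult_eq[symmetric])
  also have "\<dots> = 1" using xx yy n0 assms(2) by simp
  finally have ab: "(a * b) mod n = 1" .
  interpret M: mulinv n a b \<gamma>
    by unfold_locales (use n0 ab supp inv in \<open>simp_all add: a_def\<close>)
  show ?thesis
  proof
    fix T
    have "map_pmf (map f1) (walk n \<gamma> T) = map_pmf (\<lambda>xs. map f2 (map M.mu xs)) (walk n \<gamma> T)"
    proof (rule map_pmf_cong[OF refl])
      fix xs assume "xs \<in> set_pmf (walk n \<gamma> T)"
      then have "set xs \<subseteq> {..<n}" by (rule M.set_walk)
      have mu_eq: "\<And>k. M.mu k = (zn_inv n x * y * k) mod n" unfolding M.mu_def by (simp add: a_def)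
      show "map f1 xs = map f2 (map M.mu xs)"
        using f12 \<open>set xs \<subseteq> {..<n}\<close> by (auto simp: mu_eq)
    qed
    also have "\<dots> = map_pmf (map f2) (map_pmf (map M.mu) (walk n \<gamma> T))" by (simp add: map_pmf_comp)
    also have "\<dots> = map_pmf (map f2) (walk n \<gamma> T)" by (simp add: M.map_walk)
    finally show "map_pmf (map f1) (walk n \<gamma> T) = map_pmf (map f2) (walk n \<gamma> T)" .
  qed
qed

end
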